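(* Let $D$ be a digon-free digraph with $n$ vertices, and let $\tilde{\Delta}=\max\{\sqrt{d^+(v)d^-(v)} : v\in V(D)\}$. Then $$\alpha(D)\geq \frac{n}{\frac{2\tilde{\Delta}}{3}+1}.$$
   Context: All digraphs are finite, loopless and strict (at most one edge from $u$ to $v$ for distinct $u,v$). A digraph is digon-free if it has no directed cycle of length $2$. $d^+(v)$ and $d^-(v)$ denote the out-degree and in-degree of $v$. A subset $S\subseteq V(D)$ is acyclic if $D[S]$ contains no directed cycle; $\alpha(D)$ is the maximum size of an acyclic subset of $V(D)$. *)

theory Defs
  imports Complex_Main
begin

definition digraph :: "'a set \<Rightarrow> ('a \<times> 'a) set \<Rightarrow> bool" where
  "digraph V A \<longleftrightarrow> finite V \<and> A \<subseteq> V \<times> V \<and> (\<forall>v. (v, v) \<notin> A)"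

definition digon_free :: "('a \<times> 'a) set \<Rightarrow> bool" where
  "digon_free A \<longleftrightarrow> (\<forall>u v. (u, v) \<in> A \<longrightarrow> (v, u) \<notin> A)"

definition out_deg :: "'a set \<Rightarrow> ('a \<times> 'a) set \<Rightarrow> 'a \<Rightarrow> nat" where
  "out_deg V A v = card {w \<in> V. (v, w) \<in> A}"

definition in_deg :: "'a set \<Rightarrow> ('a \<times> 'a) set \<Rightarrow> 'a \<Rightarrow> nat" where
  "in_deg V A v = card {w \<in> V. (w, v) \<in> A}"

definition acyclic_set :: "('a \<times> 'a) set \<Rightarrow> 'a set \<Rightarrow> bool" where
  "acyclic_set A S \<longleftrightarrow> acyclic (A \<inter> (S \<times> S))"

definition dichromatic_alpha :: "'a set \<Rightarrow> ('a \<times> 'a) set \<Rightarrow> nat" where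
  "dichromatic_alpha V A = Max {card S | S. S \<subseteq> V \<and> acyclic_set A S}"

definition geo_max_deg :: "'a set \<Rightarrow> ('a \<times> 'a) set \<Rightarrow> real" where
  "geo_max_deg V A = Max ((\<lambda>v. sqrt (real (out_deg V A v) * real (in_deg V A v))) ` V)"

end

theory Submission
  imports Defs
begin

definition fd :: "nat \<Rightarrow> nat \<Rightarrow> real" where
  "fd a b = 1/(real a+1) + 1/(real b+1) - 1/(real a + real b + 1)"

lemma fd0 [simp]: "fd 0 b = 1" "fd a 0 = 1"
  by (simp_all add: fd_def)

lemma real_id: "(x::real) > 0 \<Longrightarrow> y > 0 \<Longrightarrow>
  x*(1/x+1/(y+1)-1/(x+y)) + y*(1/(x+1)+1/y-1/(x+y)) = (x+y+1)*(1/(x+1)+1/(y+1)-1/(x+y+1))"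
  apply (simp add: divide_simps)
  apply (simp add: algebra_simps)
  done

lemma real_id2: "(x::real) \<ge> 0 \<Longrightarrow> y \<ge> 0 \<Longrightarrow> s*s = x*y \<Longrightarrow> 1/(x+1)+1/(y+1)-1/(x+y+1) = ((x+y+1)*(x+y+1) - s*s)/((s*s+(x+y+1))*(x+y+1))"
  apply (simp add: divide_simps add_nonneg_pos add_pos_nonneg)
  apply (simp add: algebra_simps)
  using mult_nonneg_nonneg[of x y] by linarith

lemma fd_identity:
  "real a * fd (a-1) b + real b * fd a (b-1) + (if a=0 \<or> b=0 then 1 else 0)
     = (real a + real b + 1) * fd a b"
proof (cases "a=0")
  case True then show ?thesis by (cases "b=0") auto
next
  case False
  show ?thesis
  proof (cases "b=0")
    case True with False show ?thesis by auto
  next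
    case False2: False
    have "real (a-1) + 1 = real a" "real (b-1) + 1 = real b" using False False2 by auto
    moreover have "real (a - 1) + real b + 1 = real a + real b"
       "real a + real (b - 1) + 1 = real a + real b" using False False2 by auto
    ultimately show ?thesis using False False2 real_id[of "real a" "real b"]
      by (simp add: fd_def add.commute)
  qed
qed

lemma fd_bound: "fd a b \<ge> 3 / (2 * sqrt (real a * real b) + 3)"
proof -
  define s where "s = sqrt (real a * real b)"
  define p where "p = real a + real b"
  have s0: "s \<ge> 0" unfolding s_def by simp
  have ss: "s * s = real a * real b" unfolding s_def by simp
  have "(real a - real b)^2 \<ge> 0" by simp
  hence "p * p \<ge> 4 * (s*s)" unfolding p_def ss by (simp add: power2_eq_square algebra_simps)
  hence "p * p \<ge> (2*s)*(2*s)" by simp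
  moreover have "p \<ge> 0" unfolding p_def by simp
  ultimately have ps: "p \<ge> 2*s"
    using power2_le_imp_le[of "2*s" p] by (simp add: power2_eq_square)
  define P where "P = p + 1"
  have P1: "P \<ge> 2*s+1" using ps unfolding P_def by simp
  have "2*P - 3*s \<ge> s + 2" using P1 by simp
  hence "P * (2*P - 3*s) \<ge> (2*s+1)*(s+2)"
    using P1 s0 by (intro mult_mono) auto
  moreover have "P * (2*P - 3*s) = 2*P*P - 3*s*P" "(2*s+1)*(s+2) = 2*s*s+5*s+2"
    by (simp_all add: algebra_simps)
  ultimately have key: "2*P*P - 3*s*P - 2*s*s - 3*s \<ge> 0" using s0 by linarith
  have poly: "3*((s*s + P)*P) \<le> (2*s+3)*(P*P - s*s)"
  proof -
    have "(2*s+3)*(P*P - s*s) - 3*((s*s + P)*P)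
        = s * (2*P*P - 3*s*P - 2*s*s - 3*s)" by (simp add: algebra_simps)
    moreover have "s * (2*P*P - 3*s*P - 2*s*s - 3*s) \<ge> 0" using key s0 by simp
    ultimately show ?thesis by linarith
  qed
  have Ppos: "P > 0" using P1 s0 by simp
  have dpos: "(s*s + P)*P > 0" using Ppos s0 by (simp add: add_nonneg_pos)
  have fdeq: "fd a b = (P*P - s*s) / ((s*s + P)*P)"
    unfolding fd_def P_def p_def using real_id2[OF _ _ ss] by simp
  have "3 / (2*s+3) \<le> (P*P - s*s) / ((s*s + P)*P)"
    using poly dpos s0 by (simp add: divide_simps mult.commute)
  thus ?thesis using fdeq s_def by simp
qed


definition dO :: "('a \<times> 'a) set \<Rightarrow> 'a set \<Rightarrow> 'a \<Rightarrow> nat" where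
  "dO A W v = card {u \<in> W. (v, u) \<in> A}"
definition dI :: "('a \<times> 'a) set \<Rightarrow> 'a set \<Rightarrow> 'a \<Rightarrow> nat" where
  "dI A W v = card {u \<in> W. (u, v) \<in> A}"
definition FW :: "('a \<times> 'a) set \<Rightarrow> 'a set \<Rightarrow> real" where
  "FW A W = (\<Sum>v\<in>W. fd (dO A W v) (dI A W v))"
definition ind :: "('a \<times> 'a) set \<Rightarrow> 'a set \<Rightarrow> 'a \<Rightarrow> real" where
  "ind A W v = (if dO A W v = 0 \<or> dI A W v = 0 then 1 else 0)"

lemma per_v:
  assumes fin: "finite W" and vW: "v \<in> W" and df: "digon_free A" and lf: "\<forall>x. (x,x) \<notin> A"
  shows "(\<Sum>w\<in>W-{v}. fd (dO A (W-{w}) v) (dI A (W-{w}) v)) + ind A W v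
         = real (card W) * fd (dO A W v) (dI A W v)"
proof -
  define Os where "Os = {u \<in> W. (v, u) \<in> A}"
  define Is where "Is = {u \<in> W. (u, v) \<in> A}"
  define R where "R = W - {v} - Os - Is"
  define a where "a = card Os"
  define b where "b = card Is"
  have aeq: "dO A W v = a" unfolding a_def dO_def Os_def ..
  have beq: "dI A W v = b" unfolding b_def dI_def Is_def ..
  have OI: "Os \<inter> Is = {}" using df unfolding Os_def Is_def digon_free_def by auto
  have Osub: "Os \<subseteq> W - {v}" using lf unfolding Os_def by auto
  have Isub: "Is \<subseteq> W - {v}" using lf unfolding Is_def by auto
  have finO: "finite Os" "finite Is" "finite R" using fin unfolding Os_def Is_def R_def by auto
  have split: "W - {v} = Os \<union> Is \<union> R" using Osub Isub unfolding R_def by auto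
  have disj1: "(Os \<union> Is) \<inter> R = {}" unfolding R_def by auto
  have dOr: "dO A (W-{w}) v = card (Os - {w})" for w
    unfolding dO_def Os_def by (rule arg_cong[where f=card]) auto
  have dIr: "dI A (W-{w}) v = card (Is - {w})" for w
    unfolding dI_def Is_def by (rule arg_cong[where f=card]) auto
  define g where "g w = fd (dO A (W-{w}) v) (dI A (W-{w}) v)" for w
  have gO: "w \<in> Os \<Longrightarrow> g w = fd (a-1) b" for w
  proof -
    assume w: "w \<in> Os"
    hence "Is - {w} = Is" using OI by auto
    thus ?thesis using w finO unfolding g_def dOr dIr a_def b_def by (simp add: card_Diff_singleton)
  qed
  have gI: "w \<in> Is \<Longrightarrow> g w = fd a (b-1)" for w
  proof -
    assume w: "w \<in> Is"
    hence "Os - {w} = Os" using OI by auto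
    thus ?thesis using w finO unfolding g_def dOr dIr a_def b_def by (simp add: card_Diff_singleton)
  qed
  have gR: "w \<in> R \<Longrightarrow> g w = fd a b" for w
    unfolding g_def dOr dIr a_def b_def R_def by (auto simp: Diff_triv)
  have "(\<Sum>w\<in>W-{v}. g w) = (\<Sum>w\<in>Os. g w) + (\<Sum>w\<in>Is. g w) + (\<Sum>w\<in>R. g w)"
    unfolding split using finO OI disj1 by (simp add: sum.union_disjoint)
  also have "\<dots> = real a * fd (a-1) b + real b * fd a (b-1) + real (card R) * fd a b"
    using gO gI gR by (simp add: a_def b_def)
  finally have S: "(\<Sum>w\<in>W-{v}. g w) = real a * fd (a-1) b + real b * fd a (b-1) + real (card R) * fd a b" .
  have "card (W - {v}) = a + b + card R"
    unfolding split a_def b_def using finO OI disj1 by (simp add: card_Un_disjoint)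
  moreover have "card W = Suc (card (W - {v}))" using fin vW by (rule card.remove)
  ultimately have "card W = a + b + 1 + card R" by simp
  hence cW: "real (card W) = real a + real b + 1 + real (card R)" by simp
  have "ind A W v = (if a = 0 \<or> b = 0 then 1 else 0)" unfolding ind_def aeq beq ..
  hence "(\<Sum>w\<in>W-{v}. g w) + ind A W v = (real a + real b + 1) * fd a b + real (card R) * fd a b"
    using S fd_identity[of a b] by simp
  also have "\<dots> = real (card W) * fd a b" unfolding cW by (simp add: algebra_simps)
  finally show ?thesis unfolding g_def aeq beq .
qed

lemma sum_skip1: "finite W \<Longrightarrow> (\<Sum>v\<in>W. if v = w then 0 else h v) = (\<Sum>v\<in>W-{w}. h v)"
proof -
  assume f: "finite W"
  have "(\<Sum>v\<in>W. if v = w then 0 else h v) = (\<Sum>v\<in>W-{w}. if v = w then 0 else h v)"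
    using f by (intro sum.mono_neutral_right) auto
  also have "\<dots> = (\<Sum>v\<in>W-{w}. h v)" by (rule sum.cong) auto
  finally show ?thesis .
qed

lemma sum_skip2: "finite W \<Longrightarrow> (\<Sum>v\<in>W. if w = v then 0 else h v) = (\<Sum>v\<in>W-{w}. h v)"
  using sum_skip1[of W w h] by (simp add: eq_commute)

lemma avg:
  assumes fin: "finite W" and df: "digon_free A" and lf: "\<forall>x. (x,x) \<notin> A"
  shows "(\<Sum>w\<in>W. FW A (W-{w}) + ind A W w) = real (card W) * FW A W"
proof -
  define g where "g w v = fd (dO A (W-{w}) v) (dI A (W-{w}) v)" for w v
  have "(\<Sum>w\<in>W. FW A (W-{w})) = (\<Sum>w\<in>W. \<Sum>v\<in>W. if v = w then 0 else g w v)"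
  proof (rule sum.cong[OF refl])
    fix w assume "w \<in> W"
    have "(\<Sum>v\<in>W. if v = w then 0 else g w v) = (\<Sum>v\<in>W-{w}. g w v)"
      using fin by (rule sum_skip1)
    thus "FW A (W-{w}) = (\<Sum>v\<in>W. if v = w then 0 else g w v)" unfolding FW_def g_def by simp
  qed
  also have "\<dots> = (\<Sum>v\<in>W. \<Sum>w\<in>W. if v = w then 0 else g w v)" by (rule sum.swap)
  also have "\<dots> = (\<Sum>v\<in>W. \<Sum>w\<in>W-{v}. g w v)"
    by (rule sum.cong[OF refl]) (rule sum_skip2[OF fin])
  finally have "(\<Sum>w\<in>W. FW A (W-{w}) + ind A W w) = (\<Sum>v\<in>W. (\<Sum>w\<in>W-{v}. g w v) + ind A W v)"
    by (simp add: sum.distrib)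
  also have "\<dots> = (\<Sum>v\<in>W. real (card W) * fd (dO A W v) (dI A W v))"
    using per_v[OF fin _ df lf] unfolding g_def by (intro sum.cong refl) auto
  also have "\<dots> = real (card W) * FW A W" unfolding FW_def by (simp add: sum_distrib_left)
  finally show ?thesis .
qed

lemma sink_trancl:
  assumes "(x, y) \<in> (R \<union> E)\<^sup>+" "\<forall>p\<in>E. snd p = w" "\<forall>p\<in>R \<union> E. fst p \<noteq> w" "y \<noteq> w"
  shows "(x, y) \<in> R\<^sup>+"
  using assms(1,4)
proof (induction rule: trancl_induct)
  case (base y)
  have "(x, y) \<notin> E"
  proof
    assume "(x, y) \<in> E"
    hence "snd (x, y) = w" using assms(2) by blast
    thus False using base.prems by simp
  qed
  hence "(x, y) \<in> R" using base.hyps by blast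
  thus ?case by (rule r_into_trancl)
next
  case (step y z)
  have "fst (y, z) \<noteq> w" using step.hyps(2) assms(3) by blast
  hence yw: "y \<noteq> w" by simp
  have "(y, z) \<notin> E"
  proof
    assume "(y, z) \<in> E"
    hence "snd (y, z) = w" using assms(2) by blast
    thus False using step.prems by simp
  qed
  hence "(y,z) \<in> R" using step.hyps(2) by blast
  moreover have "(x, y) \<in> R\<^sup>+" using step.IH yw .
  ultimately show ?case by (blast intro: trancl_into_trancl)
qed

lemma acyc_add_sink:
  assumes ac: "acyclic (R \<inter> (S \<times> S))" and nw: "\<forall>u \<in> insert w S. (w, u) \<notin> R"
  shows "acyclic (R \<inter> (insert w S \<times> insert w S))"
proof -
  define E where "E = R \<inter> (insert w S \<times> insert w S) \<inter> (UNIV \<times> {w})"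
  have eq: "R \<inter> (insert w S \<times> insert w S) = (R \<inter> (S \<times> S)) \<union> E"
    unfolding E_def using nw by auto
  show ?thesis unfolding acyclic_def eq
  proof (intro allI notI)
    fix x assume xx: "(x, x) \<in> (R \<inter> S \<times> S \<union> E)\<^sup>+"
    have E2: "\<forall>p\<in>E. snd p = w" unfolding E_def by auto
    have E3: "\<forall>p\<in>R \<inter> S \<times> S \<union> E. fst p \<noteq> w" using nw unfolding E_def by auto
    show False
    proof (cases "x = w")
      case True
      then obtain z where z: "(w, z) \<in> R \<inter> S \<times> S \<union> E" using xx tranclD by metis
      have "fst (w, z) \<noteq> w" using E3 z by blast
      thus False by simp
    next
      case False
      then have "(x,x) \<in> (R \<inter> S \<times> S)\<^sup>+" using sink_trancl[OF xx E2 E3] by simp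
      thus False using ac unfolding acyclic_def by blast
    qed
  qed
qed

lemma acyc_add:
  assumes ac: "acyclic_set A S" and SW: "S \<subseteq> W" and wW: "w \<in> W" and lf: "\<forall>x. (x,x) \<notin> A"
    and i: "dO A W w = 0 \<or> dI A W w = 0" and fin: "finite W"
  shows "acyclic_set A (insert w S)"
proof (cases "dO A W w = 0")
  case True
  hence "{u \<in> W. (w, u) \<in> A} = {}" using fin unfolding dO_def by simp
  hence "\<forall>u \<in> insert w S. (w, u) \<notin> A" using SW lf by auto
  thus ?thesis using acyc_add_sink[of A S w] ac unfolding acyclic_set_def by blast
next
  case False
  hence "dI A W w = 0" using i by simp
  hence "{u \<in> W. (u, w) \<in> A} = {}" using fin unfolding dI_def by simp
  hence nw: "\<forall>u \<in> insert w S. (w, u) \<notin> A\<inverse>" using SW lf by auto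
  have cv: "(A \<inter> (X \<times> X))\<inverse> = A\<inverse> \<inter> (X \<times> X)" for X by auto
  have "acyclic (A\<inverse> \<inter> (S \<times> S))" using ac unfolding acyclic_set_def
    by (simp only: cv[symmetric] acyclic_converse)
  hence "acyclic (A\<inverse> \<inter> (insert w S \<times> insert w S))" by (rule acyc_add_sink[OF _ nw])
  thus ?thesis unfolding acyclic_set_def
    by (simp only: cv[symmetric] acyclic_converse)
qed

lemma main_ind:
  assumes "finite W" and df: "digon_free A" and lf: "\<forall>x. (x,x) \<notin> A"
  shows "\<exists>S \<subseteq> W. acyclic_set A S \<and> real (card S) \<ge> FW A W"
  using assms(1)
proof (induction W rule: finite_psubset_induct)
  case (psubset W)
  show ?case
  proof (cases "W = {}")
    case True
    thus ?thesis by (intro exI[of _ "{}"]) (simp add: FW_def acyclic_set_def acyclic_def)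
  next
    case False
    have "\<exists>w\<in>W. FW A (W-{w}) + ind A W w \<ge> FW A W"
    proof (rule ccontr)
      assume "\<not> ?thesis"
      hence "\<forall>w\<in>W. FW A (W-{w}) + ind A W w < FW A W" by auto
      hence "(\<Sum>w\<in>W. FW A (W-{w}) + ind A W w) < (\<Sum>w\<in>W. FW A W)"
        using psubset.hyps False by (intro sum_strict_mono) auto
      thus False using avg[OF psubset.hyps df lf] by simp
    qed
    then obtain w where wW: "w \<in> W" and ge: "FW A (W-{w}) + ind A W w \<ge> FW A W" by blast
    have "W - {w} \<subset> W" using wW by auto
    then obtain S where S: "S \<subseteq> W - {w}" "acyclic_set A S" "real (card S) \<ge> FW A (W-{w})"
      using psubset.IH[of "W - {w}"] by blast
    have finS: "finite S" using S(1) psubset.hyps finite_subset by blast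
    show ?thesis
    proof (cases "dO A W w = 0 \<or> dI A W w = 0")
      case True
      have SW: "S \<subseteq> W" using S(1) by blast
      have ac: "acyclic_set A (insert w S)" by (rule acyc_add[OF S(2) SW wW lf True psubset.hyps])
      have "w \<notin> S" using S(1) by blast
      hence "card (insert w S) = card S + 1" using finS by simp
      moreover have "ind A W w = 1" using True unfolding ind_def by simp
      ultimately have "real (card (insert w S)) \<ge> FW A W" using S(3) ge by simp
      moreover have "insert w S \<subseteq> W" using SW wW by blast
      ultimately show ?thesis using ac by blast
    next
      case False
      hence "ind A W w = 0" unfolding ind_def by simp
      hence "real (card S) \<ge> FW A W" using S(3) ge by simp
      moreover have "S \<subseteq> W" using S(1) by blast
      ultimately show ?thesis using S(2) by blast
    qed
  qed
qed

theorem mainTheorem2: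
  fixes V :: "'a set" and A :: "('a \<times> 'a) set"
  assumes "digraph V A" and "digon_free A"
  shows "real (dichromatic_alpha V A) \<ge> real (card V) / (2 * geo_max_deg V A / 3 + 1)"
proof (cases "V = {}")
  case True thus ?thesis by simp
next
  case False
  have fin: "finite V" and sub: "A \<subseteq> V \<times> V" and lf: "\<forall>x. (x,x) \<notin> A"
    using assms(1) unfolding digraph_def by auto
  obtain S where S: "S \<subseteq> V" "acyclic_set A S" "real (card S) \<ge> FW A V"
    using main_ind[OF fin assms(2) lf] by blast
  define k where "k = geo_max_deg V A"
  have kge: "v \<in> V \<Longrightarrow> sqrt (real (out_deg V A v) * real (in_deg V A v)) \<le> k" for v
    unfolding k_def geo_max_deg_def using fin by (intro Max_ge) auto
  obtain v0 where v0: "v0 \<in> V" using False by blast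
  have "0 \<le> sqrt (real (out_deg V A v0) * real (in_deg V A v0))" by simp
  hence k0: "k \<ge> 0" using kge[OF v0] by linarith
  have tm: "v \<in> V \<Longrightarrow> 3 / (2*k+3) \<le> fd (dO A V v) (dI A V v)" for v
  proof -
    assume vV: "v \<in> V"
    define t where "t = sqrt (real (out_deg V A v) * real (in_deg V A v))"
    have t0: "t \<ge> 0" unfolding t_def by simp
    have "3 / (2*k+3) \<le> 3 / (2*t+3)" using kge[OF vV] t0 unfolding t_def[symmetric]
      by (intro divide_left_mono) auto
    also have "\<dots> \<le> fd (dO A V v) (dI A V v)"
      using fd_bound[of "out_deg V A v" "in_deg V A v"] unfolding t_def dO_def dI_def out_deg_def in_deg_def
      by simp
    finally show ?thesis .
  qed
  have "real (card V) * (3 / (2*k+3)) = (\<Sum>v\<in>V. 3 / (2*k+3))" by simp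
  also have "\<dots> \<le> FW A V" unfolding FW_def using tm by (intro sum_mono) auto
  finally have c1: "real (card V) * (3 / (2*k+3)) \<le> real (card S)" using S(3) by linarith
  have "real (card V) / (2 * k / 3 + 1) = real (card V) * (3 / (2*k+3))"
    using k0 by (simp add: field_simps)
  moreover have "card S \<le> dichromatic_alpha V A"
    unfolding dichromatic_alpha_def
  proof (rule Max_ge)
    have "{card S |S. S \<subseteq> V \<and> acyclic_set A S} \<subseteq> card ` Pow V" by blast
    thus "finite {card S |S. S \<subseteq> V \<and> acyclic_set A S}" using fin finite_subset by blast
    show "card S \<in> {card S |S. S \<subseteq> V \<and> acyclic_set A S}" using S(1,2) by blast
  qed
  hence "real (card S) \<le> real (dichromatic_alpha V A)" by simp
  ultimately have "real (card V) / (2 * k / 3 + 1) \<le> real (dichromatic_alpha V A)"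
    using c1 by linarith
  thus ?thesis unfolding k_def .
qed

end
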